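(* Let $S$ be the free semigroup on countably many generators, enumerated as $\vec{s}=(s_n)_{n\in\omega}$. Every very strongly productive ultrafilter on $S$ is multiplicatively isomorphic to an ordered union ultrafilter, and hence is sparse.
   Context: For a sequence $\vec{x}=(x_n)_{n\in\omega}$ in $S$, $\mathrm{FP}(\vec{x})$ is the set of products $\prod_{i\in a}x_i$ (increasing order of indices), $a$ a finite nonempty subset of $\omega$. A sequence $\vec{y}$ is a product subsystem of $\vec{x}$ if there are finite nonempty $a_n\subseteq\omega$ with $\max a_n<\min a_{n+1}$ and $y_n=\prod_{i\in a_n}x_i$ for all $n$. An ultrafilter $p$ on $S$ is very strongly productive if every $A\in p$ contains some $\mathrm{FP}(\vec{x})\in p$ with $\vec{x}$ a product subsystem of $\vec{s}$. $\mathbb{F}$ is the partial semigroup of finite nonempty subsets of $\omega$ with $ab=a\cup b$ defined iff $\max a<\min b$; an ordered union ultrafilter is an ultrafilter $\mathcal{U}$ on $\mathbb{F}$ such that every member contains some $\mathrm{FP}(\vec{b})\in\mathcal{U}$ for a sequence $\vec{b}$ in $\mathbb{F}$ with $\max b_i<\min b_{i+1}$. $p$ is multiplicatively isomorphic to an ordered union ultrafilter if for some sequence $\vec{x}$ in $S$ the map $f:\mathbb{F}\to\mathrm{FP}(\vec{x})$, $f(a)=\prod_{i\in a}x_i$, is injective and $\{f^{-1}[A]:A\in p\}$ is an ordered union ultrafilter. $p$ is sparse if for every $A\in p$ there are a sequence $\vec{x}$ in $S$ and a subsequence $\vec{y}=(x_{k_n})_n$ ($k_0<k_1<\cdots$)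 with $\mathrm{FP}(\vec{y})\in p$, $\mathrm{FP}(\vec{x})\subseteq A$, and $\{k_n:n\in\omega\}$ coinfinite in $\omega$. *)

theory Defs
  imports Main
begin

text \<open>Elements of S are nonempty words over the alphabet nat; the semigroup
operation is concatenation. The generators are the one-letter words s n = [n].\<close>

definition FS :: "nat list set" where
  "FS = {w. w \<noteq> []}"

definition gen :: "nat \<Rightarrow> nat list" where
  "gen n = [n]"

definition fprod :: "(nat \<Rightarrow> nat list) \<Rightarrow> nat set \<Rightarrow> nat list" where
  "fprod x a = concat (map x (sorted_list_of_set a))"

definition FinNE :: "nat set set" where
  "FinNE = {a. finite a \<and> a \<noteq> {}}"

definition FP :: "(nat \<Rightarrow> nat list) \<Rightarrow> nat list set" where
  "FP x = {fprod x a | a. a \<in> FinNE}"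

definition product_subsystem :: "(nat \<Rightarrow> nat list) \<Rightarrow> (nat \<Rightarrow> nat list) \<Rightarrow> bool" where
  "product_subsystem y x \<longleftrightarrow>
     (\<exists>a :: nat \<Rightarrow> nat set. (\<forall>n. a n \<in> FinNE \<and> Max (a n) < Min (a (Suc n)) \<and> y n = fprod x (a n)))"

definition ultrafilter_on :: "'a set \<Rightarrow> 'a set set \<Rightarrow> bool" where
  "ultrafilter_on X p \<longleftrightarrow>
     (\<forall>A\<in>p. A \<subseteq> X) \<and> X \<in> p \<and> {} \<notin> p \<and>
     (\<forall>A B. A \<in> p \<longrightarrow> B \<in> p \<longrightarrow> A \<inter> B \<in> p) \<and>
     (\<forall>A B. A \<in> p \<longrightarrow> A \<subseteq> B \<longrightarrow> B \<subseteq> X \<longrightarrow> B \<in> p) \<and>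
     (\<forall>A. A \<subseteq> X \<longrightarrow> A \<in> p \<or> X - A \<in> p)"

definition very_strongly_productive :: "nat list set set \<Rightarrow> bool" where
  "very_strongly_productive p \<longleftrightarrow> ultrafilter_on FS p \<and>
     (\<forall>A\<in>p. \<exists>x. product_subsystem x gen \<and> FP x \<subseteq> A \<and> FP x \<in> p)"

text \<open>FP in the partial semigroup F: unions of b_i over finite nonempty index sets
(the products are defined since the b_i are ordered).\<close>
definition FU :: "(nat \<Rightarrow> nat set) \<Rightarrow> nat set set" where
  "FU b = {(\<Union>i\<in>a. b i) | a. a \<in> FinNE}"

definition ordered_union_ultrafilter :: "nat set set set \<Rightarrow> bool" where
  "ordered_union_ultrafilter U \<longleftrightarrow> ultrafilter_on FinNE U \<and>
     (\<forall>A\<in>U. \<exists>b. (\<forall>i. b i \<in> FinNE \<and> Max (b i) < Min (b (Suc i))) \<and> FU b \<subseteq> A \<and> FU b \<in> U)"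

definition mult_iso_ordered_union :: "nat list set set \<Rightarrow> bool" where
  "mult_iso_ordered_union p \<longleftrightarrow>
     (\<exists>x. (\<forall>n. x n \<in> FS) \<and> inj_on (fprod x) FinNE \<and>
        ordered_union_ultrafilter ((\<lambda>A. {a \<in> FinNE. fprod x a \<in> A}) ` p))"

definition sparse :: "nat list set set \<Rightarrow> bool" where
  "sparse p \<longleftrightarrow>
     (\<forall>A\<in>p. \<exists>x k. (\<forall>n. x n \<in> FS) \<and> strict_mono k \<and> FP (x \<circ> k) \<in> p \<and> FP x \<subseteq> A \<and>
        infinite (UNIV - range k))"

end

theory Submission
  imports Defs
begin

abbreviation sl :: "nat set \<Rightarrow> nat list" where "sl \<equiv> sorted_list_of_set"

definition ordb :: "(nat \<Rightarrow> nat set) \<Rightarrow> bool" where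
  "ordb b \<longleftrightarrow> (\<forall>n. b n \<in> FinNE \<and> Max (b n) < Min (b (Suc n)))"

lemma concat_singletons: "concat (map (\<lambda>n. [n]) xs) = xs"
  by (induction xs) auto

lemma fprod_gen: "fprod gen = sl"
proof -
  have g: "gen = (\<lambda>n. [n])" by (rule ext) (simp add: gen_def)
  show ?thesis by (rule ext) (simp add: fprod_def g concat_singletons)
qed

lemma ordb_fin: "ordb b \<Longrightarrow> finite (b n) \<and> b n \<noteq> {}"
  by (auto simp: ordb_def FinNE_def)

lemma ordb_MaxMin:
  assumes "ordb b" "i < j" shows "Max (b i) < Min (b j)"
  using assms(2)
proof (induction j)
  case 0 then show ?case by simp
next
  case (Suc j)
  have "Min (b j) \<le> Max (b j)" using ordb_fin[OF assms(1), of j] by (meson Max_in Min_le)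
  show ?case
  proof (cases "i = j")
    case True then show ?thesis using assms(1) by (simp add: ordb_def)
  next
    case False then have "i < j" using Suc.prems by simp
    then have "Max (b i) < Min (b j)" by (rule Suc.IH)
    moreover have "Max (b j) < Min (b (Suc j))" using assms(1) by (simp add: ordb_def)
    ultimately show ?thesis using \<open>Min (b j) \<le> Max (b j)\<close> by simp
  qed
qed

lemma ordb_lt:
  assumes "ordb b" "i < j" "u \<in> b i" "v \<in> b j" shows "u < v"
proof -
  have "u \<le> Max (b i)" using ordb_fin[OF assms(1), of i] assms(3) by simp
  moreover have "Min (b j) \<le> v" using ordb_fin[OF assms(1), of j] assms(4) by simp
  ultimately show ?thesis using ordb_MaxMin[OF assms(1,2)] by simp
qed

lemma ordbI:
  assumes "\<And>n. b n \<in> FinNE" "\<And>n u v. u \<in> b n \<Longrightarrow> v \<in> b (Suc n) \<Longrightarrow> u < v"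
  shows "ordb b"
  unfolding ordb_def
proof (intro allI conjI)
  fix n
  show "b n \<in> FinNE" by (rule assms(1))
  have f: "finite (b m) \<and> b m \<noteq> {}" for m using assms(1)[of m] by (simp add: FinNE_def)
  show "Max (b n) < Min (b (Suc n))"
    using assms(2) f[of n] f[of "Suc n"] by (simp add: Max_in Min_in)
qed

lemma sl_union:
  assumes "finite A" "finite B" "\<forall>a\<in>A. \<forall>c\<in>B. a < c"
  shows "sl (A \<union> B) = sl A @ sl B"
proof (rule sorted_distinct_set_unique)
  show "sorted (sl A @ sl B)" "distinct (sl A @ sl B)"
    using assms by (auto simp: sorted_append intro: less_imp_le)
qed (use assms in auto)

lemma concat_sl:
  assumes "ordb b" "sorted_wrt (<) xs"
  shows "concat (map (\<lambda>i. sl (b i)) xs) = sl (\<Union>i\<in>set xs. b i)"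
  using assms(2)
proof (induction xs)
  case Nil then show ?case by simp
next
  case (Cons x xs)
  have "(\<Union>i\<in>set (x#xs). b i) = b x \<union> (\<Union>i\<in>set xs. b i)" by simp
  moreover have "sl (b x \<union> (\<Union>i\<in>set xs. b i)) = sl (b x) @ sl (\<Union>i\<in>set xs. b i)"
    apply (rule sl_union)
    using Cons.prems ordb_fin[OF assms(1)] ordb_lt[OF assms(1)] by auto
  ultimately show ?case using Cons by simp
qed

lemma KL:
  assumes "ordb b" "c \<in> FinNE"
  shows "fprod (\<lambda>n. sl (b n)) c = sl (\<Union>i\<in>c. b i)"
  using concat_sl[OF assms(1), of "sl c"] assms(2)
  by (simp add: fprod_def FinNE_def)

lemma FU_sub: "ordb b \<Longrightarrow> FU b \<subseteq> FinNE"
  using ordb_fin[of b] by (auto simp: FU_def FinNE_def)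

lemma FP_sl: "ordb b \<Longrightarrow> FP (\<lambda>n. sl (b n)) = sl ` FU b"
proof
  assume b: "ordb b"
  show "FP (\<lambda>n. sl (b n)) \<subseteq> sl ` FU b"
  proof
    fix w assume "w \<in> FP (\<lambda>n. sl (b n))"
    then obtain a where "a \<in> FinNE" "w = fprod (\<lambda>n. sl (b n)) a" by (auto simp: FP_def)
    then have "w = sl (\<Union>i\<in>a. b i)" using KL[OF b] by simp
    then show "w \<in> sl ` FU b" using \<open>a \<in> FinNE\<close> unfolding FU_def by blast
  qed
  show "sl ` FU b \<subseteq> FP (\<lambda>n. sl (b n))"
    using b by (auto simp: FP_def FU_def KL[symmetric])
qed

lemma inj_sl: "inj_on sl FinNE"
  unfolding inj_on_def FinNE_def by (metis mem_Collect_eq set_sorted_list_of_set)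

lemma sl_FS: "a \<in> FinNE \<Longrightarrow> sl a \<in> FS"
  by (auto simp: FinNE_def FS_def)


definition pre :: "nat list set \<Rightarrow> nat set set" where
  "pre A = {a \<in> FinNE. sl a \<in> A}"

definition idx :: "(nat \<Rightarrow> nat set) \<Rightarrow> nat set \<Rightarrow> nat set" where
  "idx b c = {i. b i \<subseteq> c}"

definition Rr :: "nat set \<Rightarrow> nat set" where
  "Rr e = {i \<in> e. Suc i \<notin> e}"

lemma idx_U:
  assumes "ordb b" shows "idx b (\<Union>i\<in>e. b i) = e"
proof
  show "e \<subseteq> idx b (\<Union>i\<in>e. b i)" by (auto simp: idx_def)
  show "idx b (\<Union>i\<in>e. b i) \<subseteq> e"
  proof
    fix j assume "j \<in> idx b (\<Union>i\<in>e. b i)"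
    then have sub: "b j \<subseteq> (\<Union>i\<in>e. b i)" by (simp add: idx_def)
    obtain v where v: "v \<in> b j" using ordb_fin[OF assms, of j] by auto
    then obtain i where i: "i \<in> e" "v \<in> b i" using sub by auto
    have "i = j"
    proof (rule ccontr)
      assume "i \<noteq> j"
      then have "i < j \<or> j < i" by auto
      then show False using ordb_lt[OF assms, of i j v v] ordb_lt[OF assms, of j i v v] v i by auto
    qed
    then show "j \<in> e" using i by simp
  qed
qed

lemma Rr_gap:
  assumes "finite e" "finite e'" "e \<noteq> {}" "e' \<noteq> {}" "\<forall>i\<in>e. \<forall>j\<in>e'. i < j"
    "Suc (Max e) < Min e'"
  shows "card (Rr (e \<union> e')) = card (Rr e) + card (Rr e')"
proof -
  have mx: "\<And>i. i \<in> e \<Longrightarrow> i \<le> Max e" using assms(1) by simp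
  have mn: "\<And>i. i \<in> e' \<Longrightarrow> Min e' \<le> i" using assms(2) by simp
  have eq: "Rr (e \<union> e') = Rr e \<union> Rr e'"
    unfolding Rr_def using assms(5,6) mx mn
    by (auto, fastforce+)
  have "Rr e \<inter> Rr e' = {}" using assms(5) by (auto simp: Rr_def)
  moreover have "finite (Rr e)" "finite (Rr e')" using assms(1,2) by (auto simp: Rr_def)
  ultimately show ?thesis using eq by (simp add: card_Un_disjoint)
qed

lemma Rr_adj:
  assumes "finite e" "finite e'" "e \<noteq> {}" "e' \<noteq> {}" "\<forall>i\<in>e. \<forall>j\<in>e'. i < j"
    "Suc (Max e) = Min e'"
  shows "card (Rr (e \<union> e')) + 1 = card (Rr e) + card (Rr e')"
proof -
  have mx: "\<And>i. i \<in> e \<Longrightarrow> i \<le> Max e" using assms(1) by simp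
  have mn: "\<And>i. i \<in> e' \<Longrightarrow> Min e' \<le> i" using assms(2) by simp
  have Me: "Max e \<in> e" using assms(1,3) by simp
  have Me': "Min e' \<in> e'" using assms(2,4) by simp
  have MR: "Max e \<in> Rr e" using Me mx by (force simp: Rr_def)
  have eq: "Rr (e \<union> e') = (Rr e - {Max e}) \<union> Rr e'"
    unfolding Rr_def using assms(5,6) mx mn Me Me'
    by (auto, fastforce+)
  have "(Rr e - {Max e}) \<inter> Rr e' = {}" using assms(5) by (auto simp: Rr_def)
  moreover have fin: "finite (Rr e)" "finite (Rr e')" using assms(1,2) by (auto simp: Rr_def)
  ultimately have "card (Rr (e \<union> e')) = card (Rr e - {Max e}) + card (Rr e')"
    using eq by (simp add: card_Un_disjoint)
  moreover have "card (Rr e - {Max e}) + 1 = card (Rr e)"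
    using MR fin(1) card_Suc_Diff1 by fastforce
  ultimately show ?thesis by simp
qed


context
  fixes p :: "nat list set set"
  assumes V: "very_strongly_productive p"
begin

lemma uf: "ultrafilter_on FS p" using V by (simp add: very_strongly_productive_def)

lemma uf_up: "\<forall>A B. A \<in> p \<longrightarrow> A \<subseteq> B \<longrightarrow> B \<subseteq> FS \<longrightarrow> B \<in> p"
  by (insert uf, unfold ultrafilter_on_def, elim conjE, assumption)
lemma uf_int: "\<forall>A B. A \<in> p \<longrightarrow> B \<in> p \<longrightarrow> A \<inter> B \<in> p"
  by (insert uf, unfold ultrafilter_on_def, elim conjE, assumption)
lemma uf_sub: "\<forall>A\<in>p. A \<subseteq> FS"
  by (insert uf, unfold ultrafilter_on_def, elim conjE, assumption)
lemma p_FS: "FS \<in> p"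
  by (insert uf, unfold ultrafilter_on_def, elim conjE, assumption)
lemma p_empty: "{} \<notin> p"
  by (insert uf, unfold ultrafilter_on_def, elim conjE, assumption)
lemma uf_compl: "\<forall>A. A \<subseteq> FS \<longrightarrow> A \<in> p \<or> FS - A \<in> p"
  by (insert uf, unfold ultrafilter_on_def, elim conjE, assumption)

lemma p_up: "A \<in> p \<Longrightarrow> A \<subseteq> B \<Longrightarrow> B \<subseteq> FS \<Longrightarrow> B \<in> p"
  using uf_up by blast
lemma p_int: "A \<in> p \<Longrightarrow> B \<in> p \<Longrightarrow> A \<inter> B \<in> p"
  using uf_int by blast
lemma p_compl: "A \<subseteq> FS \<Longrightarrow> A \<in> p \<or> FS - A \<in> p"
  using uf_compl by blast

lemma vsp_blocks:
  assumes "A \<in> p"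
  shows "\<exists>b. ordb b \<and> sl ` FU b \<subseteq> A \<and> sl ` FU b \<in> p"
proof -
  have "\<forall>A\<in>p. \<exists>x. product_subsystem x gen \<and> FP x \<subseteq> A \<and> FP x \<in> p"
    by (insert V, unfold very_strongly_productive_def, elim conjE, assumption)
  then obtain x where x: "product_subsystem x gen" "FP x \<subseteq> A" "FP x \<in> p"
    using assms by blast
  from x(1) obtain a where a: "\<forall>n. a n \<in> FinNE \<and> Max (a n) < Min (a (Suc n)) \<and> x n = fprod gen (a n)"
    unfolding product_subsystem_def by blast
  then have ob: "ordb a" unfolding ordb_def by blast
  have "x = (\<lambda>n. sl (a n))"
  proof
    fix n show "x n = sl (a n)" using a fprod_gen by metis
  qed
  then have "FP x = sl ` FU a" using FP_sl[OF ob] by (simp only:)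
  then have "sl ` FU a \<subseteq> A \<and> sl ` FU a \<in> p" using x(2,3) by simp
  then show ?thesis using ob by blast
qed

lemma R_in: "sl ` FinNE \<in> p"
proof -
  obtain b where b: "ordb b" "sl ` FU b \<subseteq> FS" "sl ` FU b \<in> p"
    using vsp_blocks[OF p_FS] by blast
  have "sl ` FU b \<subseteq> sl ` FinNE" using FU_sub[OF b(1)] by (rule image_mono)
  moreover have "sl ` FinNE \<subseteq> FS" using sl_FS by blast
  ultimately show ?thesis by (rule p_up[OF b(3)])
qed

lemma pre_img: "B \<subseteq> FinNE \<Longrightarrow> pre (sl ` B) = B"
  using inj_sl by (auto simp: pre_def inj_on_def)

lemma U_iff: "B \<in> pre ` p \<longleftrightarrow> B \<subseteq> FinNE \<and> sl ` B \<in> p"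
proof
  assume "B \<in> pre ` p"
  then obtain A where A: "A \<in> p" "B = pre A" by auto
  have sub: "B \<subseteq> FinNE" using A by (auto simp: pre_def)
  have "A \<inter> sl ` FinNE \<subseteq> sl ` B" using A by (auto simp: pre_def)
  moreover have "sl ` B \<subseteq> FS" using sub sl_FS by auto
  ultimately have "sl ` B \<in> p" using p_up p_int[OF A(1) R_in] by blast
  then show "B \<subseteq> FinNE \<and> sl ` B \<in> p" using sub by simp
next
  assume "B \<subseteq> FinNE \<and> sl ` B \<in> p"
  then show "B \<in> pre ` p" using pre_img by (metis image_eqI)
qed

lemma U_D1: "B \<in> pre ` p \<Longrightarrow> B \<subseteq> FinNE" using U_iff by blast
lemma U_D2: "B \<in> pre ` p \<Longrightarrow> sl ` B \<in> p" using U_iff by blast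
lemma U_I: "B \<subseteq> FinNE \<Longrightarrow> sl ` B \<in> p \<Longrightarrow> B \<in> pre ` p" using U_iff by blast

lemma U_uf: "ultrafilter_on FinNE (pre ` p)"
  unfolding ultrafilter_on_def
proof (intro conjI allI impI ballI)
  show "A \<subseteq> FinNE" if "A \<in> pre ` p" for A using that by (rule U_D1)
  show "FinNE \<in> pre ` p" using U_I R_in by blast
  show "{} \<notin> pre ` p"
  proof
    assume "{} \<in> pre ` p"
    then have "sl ` {} \<in> p" by (rule U_D2)
    then show False using p_empty by simp
  qed
  show "A \<inter> B \<in> pre ` p" if "A \<in> pre ` p" "B \<in> pre ` p" for A B
  proof -
    have s: "A \<subseteq> FinNE" "B \<subseteq> FinNE" using that U_D1 by auto
    have "sl ` (A \<inter> B) = sl ` A \<inter> sl ` B"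
      by (rule inj_on_image_Int[OF inj_sl s])
    moreover have "sl ` A \<inter> sl ` B \<in> p" using p_int U_D2 that by blast
    ultimately show ?thesis using U_I s by (metis inf.coboundedI1)
  qed
  show "B \<in> pre ` p" if "A \<in> pre ` p" "A \<subseteq> B" "B \<subseteq> FinNE" for A B
  proof -
    have "sl ` A \<subseteq> sl ` B" using that(2) by (rule image_mono)
    moreover have "sl ` B \<subseteq> FS" using that(3) sl_FS by blast
    ultimately have "sl ` B \<in> p" using p_up U_D2[OF that(1)] by blast
    then show ?thesis using U_I that(3) by blast
  qed
  show "A \<in> pre ` p \<or> FinNE - A \<in> pre ` p" if "A \<subseteq> FinNE" for A
  proof (cases "sl ` A \<in> p")
    case True then show ?thesis using that U_I by blast
  next
    case False
    have "sl ` A \<subseteq> FS" using that sl_FS by blast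
    then have "FS - sl ` A \<in> p" using False p_compl by blast
    then have i: "(FS - sl ` A) \<inter> sl ` FinNE \<in> p" using p_int R_in by blast
    have "(FS - sl ` A) \<inter> sl ` FinNE \<subseteq> sl ` (FinNE - A)" by blast
    moreover have "sl ` (FinNE - A) \<subseteq> FS" using sl_FS by blast
    ultimately have "sl ` (FinNE - A) \<in> p" using i p_up by blast
    then have "FinNE - A \<in> pre ` p" using U_I by blast
    then show ?thesis by blast
  qed
qed

lemma U_OU: "B \<in> pre ` p \<Longrightarrow> \<exists>b. ordb b \<and> FU b \<subseteq> B \<and> FU b \<in> pre ` p"
proof -
  assume B: "B \<in> pre ` p"
  have B': "B \<subseteq> FinNE" "sl ` B \<in> p" using U_D1[OF B] U_D2[OF B] by auto
  obtain b where b: "ordb b" "sl ` FU b \<subseteq> sl ` B" "sl ` FU b \<in> p" using vsp_blocks[OF B'(2)] by blast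
  have "FU b \<subseteq> B"
  proof
    fix c assume c: "c \<in> FU b"
    then have "sl c \<in> sl ` B" using b by auto
    then obtain c' where "c' \<in> B" "sl c = sl c'" by auto
    moreover have "c \<in> FinNE" using c FU_sub[OF b(1)] by auto
    ultimately show "c \<in> B" using inj_sl B'(1) by (metis inj_onD subsetD)
  qed
  moreover have "FU b \<in> pre ` p" using U_I[OF FU_sub[OF b(1)] b(3)] .
  ultimately show ?thesis using b by blast
qed

lemma mult_iso: "mult_iso_ordered_union p"
  unfolding mult_iso_ordered_union_def
proof (intro exI conjI)
  show "\<forall>n. gen n \<in> FS" by (simp add: gen_def FS_def)
  show "inj_on (fprod gen) FinNE" using inj_sl by (simp add: fprod_gen)
  have e: "(\<lambda>A. {a \<in> FinNE. fprod gen a \<in> A}) = pre" by (rule ext) (simp add: pre_def fprod_gen)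
  show "ordered_union_ultrafilter ((\<lambda>A. {a \<in> FinNE. fprod gen a \<in> A}) ` p)"
    unfolding e ordered_union_ultrafilter_def using U_uf U_OU by (auto simp: ordb_def)
qed

lemma U_int: "A \<in> pre ` p \<Longrightarrow> B \<in> pre ` p \<Longrightarrow> A \<inter> B \<in> pre ` p"
proof -
  have "\<forall>A B. A \<in> pre ` p \<longrightarrow> B \<in> pre ` p \<longrightarrow> A \<inter> B \<in> pre ` p"
    by (insert U_uf, unfold ultrafilter_on_def, elim conjE, assumption)
  then show "A \<in> pre ` p \<Longrightarrow> B \<in> pre ` p \<Longrightarrow> A \<inter> B \<in> pre ` p" by blast
qed

lemma U_compl: "A \<subseteq> FinNE \<Longrightarrow> A \<in> pre ` p \<or> FinNE - A \<in> pre ` p"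
proof -
  have "\<forall>A. A \<subseteq> FinNE \<longrightarrow> A \<in> pre ` p \<or> FinNE - A \<in> pre ` p"
    by (insert U_uf, unfold ultrafilter_on_def, elim conjE, assumption)
  then show "A \<subseteq> FinNE \<Longrightarrow> A \<in> pre ` p \<or> FinNE - A \<in> pre ` p" by blast
qed

lemma sparse_p: "sparse p"
  unfolding sparse_def
proof
  fix A assume A: "A \<in> p"
  obtain b where b: "ordb b" "sl ` FU b \<subseteq> A" "sl ` FU b \<in> p" using vsp_blocks[OF A] by blast
  have FUbU: "FU b \<in> pre ` p" using U_I[OF FU_sub[OF b(1)] b(3)] .
  define col where "col c = even (card (Rr (idx b c)))" for c
  obtain C r where C: "C \<in> pre ` p" "C \<subseteq> FU b" "\<forall>c\<in>C. col c = r"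
  proof (cases "{c\<in>FU b. col c} \<in> pre ` p")
    case True
    show ?thesis by (rule that[of "{c\<in>FU b. col c}" True]) (use True in auto)
  next
    case False
    have "{c\<in>FU b. col c} \<subseteq> FinNE" using FU_sub[OF b(1)] by blast
    then have "FinNE - {c\<in>FU b. col c} \<in> pre ` p"
      using False U_compl by blast
    then have "(FinNE - {c\<in>FU b. col c}) \<inter> FU b \<in> pre ` p"
      using FUbU U_int by blast
    moreover have "(FinNE - {c\<in>FU b. col c}) \<inter> FU b = {c\<in>FU b. \<not> col c}"
      using FU_sub[OF b(1)] by blast
    ultimately show ?thesis by (intro that[of "{c\<in>FU b. \<not> col c}" False]) auto
  qed
  obtain d where d: "ordb d" "FU d \<subseteq> C" "FU d \<in> pre ` p" using U_OU[OF C(1)] by blast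
  have dn: "\<exists>e. e \<in> FinNE \<and> d n = (\<Union>i\<in>e. b i)" for n
  proof -
    have "{n} \<in> FinNE" by (simp add: FinNE_def)
    then have "d n \<in> FU d" unfolding FU_def by force
    then have "d n \<in> FU b" using d(2) C(2) by blast
    then show ?thesis unfolding FU_def by blast
  qed
  then obtain e where e: "\<And>n. e n \<in> FinNE" "\<And>n. d n = (\<Union>i\<in>e n. b i)" by metis
  have oe: "ordb e"
  proof (rule ordbI)
    show "e n \<in> FinNE" for n by (rule e(1))
    fix n u v assume uv: "u \<in> e n" "v \<in> e (Suc n)"
    show "u < v"
    proof (rule ccontr)
      assume "\<not> u < v"
      then have vu: "v \<le> u" by simp
      obtain w where w: "w \<in> b v" using ordb_fin[OF b(1), of v] by auto
      have wd: "w \<in> d (Suc n)" using w uv(2) e(2)[of "Suc n"] by blast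
      show False
      proof (cases "v = u")
        case True
        then have "w \<in> d n" using w uv(1) e(2)[of n] by blast
        then show False using ordb_lt[OF d(1), of n "Suc n" w w] wd by simp
      next
        case False
        then have "v < u" using vu by simp
        obtain z where z: "z \<in> b u" using ordb_fin[OF b(1), of u] by auto
        then have "z \<in> d n" using uv(1) e(2)[of n] by blast
        then have "z < w" using ordb_lt[OF d(1), of n "Suc n" z w] wd by simp
        moreover have "w < z" using ordb_lt[OF b(1) \<open>v < u\<close> w z] .
        ultimately show False by simp
      qed
    qed
  qed
  have efin: "finite (e n)" "e n \<noteq> {}" for n using ordb_fin[OF oe] by auto
  have idxd: "idx b (d i \<union> d j) = e i \<union> e j" for i j
  proof -
    have "d i \<union> d j = (\<Union>k\<in>e i \<union> e j. b k)" using e(2) by auto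
    then show ?thesis using idx_U[OF b(1), of "e i \<union> e j"] by (simp only:)
  qed
  have colij: "col (d i \<union> d j) = r" for i j
  proof -
    have "{i, j} \<in> FinNE" by (simp add: FinNE_def)
    moreover have "d i \<union> d j = (\<Union>k\<in>{i,j}. d k)" by auto
    ultimately have "d i \<union> d j \<in> FU d" unfolding FU_def by blast
    then show ?thesis using d(2) C(3) by blast
  qed
  have colr: "even (card (Rr (e i \<union> e j))) = r" for i j
    using colij[of i j] idxd[of i j] by (simp add: col_def)
  have colr1: "even (card (Rr (e i))) = r" for i
    using colr[of i i] by simp
  have rT: r
  proof -
    have "Max (e 0) < Min (e 1)" using oe by (simp add: ordb_def)
    moreover have "Min (e 1) \<le> Max (e 1)" using efin[of 1] by (meson Max_in Min_le)
    moreover have "Max (e 1) < Min (e 2)" using oe by (simp add: ordb_def numeral_2_eq_2)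
    ultimately have g: "Suc (Max (e 0)) < Min (e 2)" by simp
    have "card (Rr (e 0 \<union> e 2)) = card (Rr (e 0)) + card (Rr (e 2))"
      using Rr_gap[OF efin(1) efin(1) efin(2) efin(2) _ g] ordb_lt[OF oe, of 0 2] by auto
    then show r using colr[of 0 2] colr1[of 0] colr1[of 2] by auto
  qed
  have gap: "Suc (Max (e n)) < Min (e (Suc n))" for n
  proof (rule ccontr)
    assume "\<not> ?thesis"
    moreover have "Max (e n) < Min (e (Suc n))" using oe by (simp add: ordb_def)
    ultimately have adj: "Suc (Max (e n)) = Min (e (Suc n))" by simp
    have "card (Rr (e n \<union> e (Suc n))) + 1 = card (Rr (e n)) + card (Rr (e (Suc n)))"
      using Rr_adj[OF efin(1) efin(1) efin(2) efin(2) _ adj] ordb_lt[OF oe, of n "Suc n"] by auto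
    moreover have "even (card (Rr (e n \<union> e (Suc n))))" "even (card (Rr (e n)))" "even (card (Rr (e (Suc n))))"
      using colr[of n "Suc n"] colr1[of n] colr1[of "Suc n"] rT by auto
    ultimately show False by presburger
  qed
  define g where "g m = (if even m then e (m div 2) else {Suc (Max (e (m div 2)))})" for m
  have gF: "g m \<in> FinNE" for m using e(1) by (simp add: g_def FinNE_def)
  have og: "ordb g"
  proof (rule ordbI)
    show "g n \<in> FinNE" for n by (rule gF)
    fix n u v assume uv: "u \<in> g n" "v \<in> g (Suc n)"
    show "u < v"
    proof (cases "even n")
      case True
      then have "u \<in> e (n div 2)" "v = Suc (Max (e (n div 2)))" using uv by (auto simp: g_def)
      then show ?thesis using efin[of "n div 2"] by (simp add: le_imp_less_Suc)
    next
      case False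
      then have "Suc n div 2 = Suc (n div 2)" by presburger
      then have "u = Suc (Max (e (n div 2)))" "v \<in> e (Suc (n div 2))" using uv False by (auto simp: g_def)
      then show ?thesis using gap[of "n div 2"] efin[of "Suc (n div 2)"] Min_le[of "e (Suc (n div 2))" v] by simp
    qed
  qed
  define b' where "b' m = (\<Union>i\<in>g m. b i)" for m
  have b'F: "b' m \<in> FinNE" for m
    using gF[of m] ordb_fin[OF b(1)] by (auto simp: b'_def FinNE_def)
  have ob': "ordb b'"
  proof (rule ordbI)
    show "b' n \<in> FinNE" for n by (rule b'F)
    fix n u v assume "u \<in> b' n" "v \<in> b' (Suc n)"
    then obtain i j where "i \<in> g n" "u \<in> b i" "j \<in> g (Suc n)" "v \<in> b j" by (auto simp: b'_def)
    then show "u < v" using ordb_lt[OF og, of n "Suc n" i j] ordb_lt[OF b(1), of i j u v] by simp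
  qed
  have FUb': "FU b' \<subseteq> FU b"
  proof
    fix c assume "c \<in> FU b'"
    then obtain a where a: "a \<in> FinNE" "c = (\<Union>m\<in>a. b' m)" by (auto simp: FU_def)
    then have "c = (\<Union>i\<in>(\<Union>m\<in>a. g m). b i)" by (auto simp: b'_def)
    moreover have "(\<Union>m\<in>a. g m) \<in> FinNE" using a(1) gF by (auto simp: FinNE_def)
    ultimately show "c \<in> FU b" unfolding FU_def by blast
  qed
  define x' where "x' m = sl (b' m)" for m
  have comp: "x' \<circ> (\<lambda>n. 2 * n) = (\<lambda>n. sl (d n))"
    by (rule ext) (simp add: x'_def b'_def g_def e(2))
  have "FP (x' \<circ> (\<lambda>n. 2 * n)) = sl ` FU d" unfolding comp by (rule FP_sl[OF d(1)])
  then have P1: "FP (x' \<circ> (\<lambda>n. 2 * n)) \<in> p" using U_D2[OF d(3)] by simp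
  have "FP x' = sl ` FU b'" unfolding x'_def by (rule FP_sl[OF ob'])
  then have P2: "FP x' \<subseteq> A" using FUb' b(2) by blast
  have P3: "\<forall>n. x' n \<in> FS" using b'F sl_FS by (simp add: x'_def)
  have P4: "strict_mono (\<lambda>n::nat. 2 * n)" by (simp add: strict_mono_def)
  have "range (\<lambda>n::nat. 2 * n + 1) \<subseteq> UNIV - range (\<lambda>n. 2 * n)" by auto presburger
  moreover have "infinite (range (\<lambda>n::nat. 2 * n + 1))"
  proof
    assume "finite (range (\<lambda>n::nat. 2 * n + 1))"
    moreover have "inj (\<lambda>n::nat. 2 * n + 1)" by (simp add: inj_def)
    ultimately have "finite (UNIV :: nat set)" using finite_imageD by blast
    then show False by simp
  qed
  ultimately have P5: "infinite (UNIV - range (\<lambda>n::nat. 2 * n))" using finite_subset by blast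
  show "\<exists>x k. (\<forall>n. x n \<in> FS) \<and> strict_mono k \<and> FP (x \<circ> k) \<in> p \<and> FP x \<subseteq> A \<and>
        infinite (UNIV - range k)"
    using P1 P2 P3 P4 P5 by blast
qed

end
theorem mainTheorem17:
  fixes p :: "nat list set set"
  assumes "very_strongly_productive p"
  shows "mult_iso_ordered_union p \<and> sparse p"
  using mult_iso[OF assms] sparse_p[OF assms] by blast

end
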